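(* Fix an ordinal $\beta\leq\omega_1$ and consider $\mathbb{S}(\beta)$ with $\Lambda=\{A\subseteq I\times\beta: A_0\in\mathcal{B}(I),\ A_\alpha\in\{\emptyset,I\}\ \forall\,0<\alpha<\beta\}$. For every ordinal $\xi$: (i) if $\xi\leq\eta<\beta$, then every $\eta$-section of a member of $\mathcal{G}^\xi(\Lambda)$ is a Borel subset of $I$; (ii) if $\xi<\zeta+1<\beta$, then every $(\zeta+1)$-section of a member of $\mathcal{G}^\xi(\Lambda)$ is $\emptyset$ or $I$.
   Context: An LMP is $(S,\Sigma,\{\tau_a\}_{a\in L})$ with $L$ countable and Markov kernels $\tau_a$. $\Sigma(R)$ = $R$-closed members of $\Sigma$ ($A$ is $R$-closed if $x\in A$, $xRs\Rightarrow s\in A$); $\mathcal{R}^T(\Lambda)=\{(s,t):\forall a\,\forall E\in\Lambda\ \tau_a(s,E)=\tau_a(t,E)\}$; $\mathcal{G}(\Lambda)=\Sigma(\mathcal{R}^T(\Lambda))$, with $\mathcal{G}^0(\Lambda)=\Lambda$, $\mathcal{G}^{\alpha+1}(\Lambda)=\mathcal{G}(\mathcal{G}^\alpha(\Lambda))$, $\mathcal{G}^\lambda(\Lambda)=\sigma(\bigcup_{\alpha<\lambda}\mathcal{G}^\alpha(\Lambda))$ for limit $\lambda$. The processes $\mathbb{S}(\beta)$: $I=(0,1)$, $\mathfrak{m}$ Lebesgue measure, $V\subseteq I$ Lebesgue nonmeasurable, $\mathcal{B}_V=\sigma(\mathcal{B}(I)\cup\{V\})$, and $\mathfrak{m}_0,\mathfrak{m}_1$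 measures on $\mathcal{B}_V$ extending $\mathfrak{m}$ with $\mathfrak{m}_0(V)\neq\mathfrak{m}_1(V)$. Let $\{q_n\}_{n\in\omega}$ enumerate $\mathbb{Q}\cap I$. For ordinals $\eta$: $\alpha_n(0)=0$, $\alpha_n(\zeta+1)=\zeta$ for all $n$, and for limit $\lambda$, $(\alpha_n(\lambda))_{n\in\omega}$ is a fixed strictly increasing sequence of nonzero ordinals below $\lambda$ cofinal in $\lambda$. For an ordinal $\beta\leq\omega_1$, $\mathbb{S}(\beta)=(I\times\beta,\ \mathcal{B}_V\otimes\mathcal{P}(\beta),\ \{\tau_n\}_{n\in\omega})$ with $\tau_n((x,\eta),A)=x\cdot\mathfrak{m}_0(A_0)$ if $\eta=0$; $=\mathfrak{m}_0(A_{\alpha_n(\eta)})$ if $\eta>0$ and $x<q_n$; $=\mathfrak{m}_1(A_{\alpha_n(\eta)})$ if $\eta>0$ and $x\geq q_n$; here $A_\gamma=\{r:(r,\gamma)\in A\}$. These $\tau_n$ are Markov kernels, so $\mathbb{S}(\beta)$ is an LMP. *)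

theory Defs
  imports "HOL-Analysis.Analysis"
begin

text \<open>The ordinal beta is represented by a well-ordered type 'b (its elements are the
ordinals below beta).  The state space of S(beta) is I \<times> beta.\<close>

definition unit_ival :: "real set" where
  "unit_ival = {0<..<1}"

definition ord0 :: "'b::wellorder" where
  "ord0 = (LEAST x. True)"

definition is_succ_of :: "'b::wellorder \<Rightarrow> 'b \<Rightarrow> bool" where
  "is_succ_of eta zeta \<longleftrightarrow> zeta < eta \<and> \<not> (\<exists>g. zeta < g \<and> g < eta)"

definition is_limit :: "'b::wellorder \<Rightarrow> bool" where
  "is_limit l \<longleftrightarrow> l \<noteq> ord0 \<and> \<not> (\<exists>z. is_succ_of l z)"

definition sect :: "(real \<times> 'b) set \<Rightarrow> 'b \<Rightarrow> real set" where
  "sect A g = {r. (r, g) \<in> A}"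

definition BV :: "real set \<Rightarrow> real set set" where
  "BV V = sigma_sets unit_ival ({B \<in> sets borel. B \<subseteq> unit_ival} \<union> {V})"

definition SS :: "(real \<times> 'b) set" where
  "SS = unit_ival \<times> UNIV"

definition Sigma_S :: "real measure \<Rightarrow> (real \<times> 'b) set set" where
  "Sigma_S M0 = sets (M0 \<Otimes>\<^sub>M count_space (UNIV :: 'b set))"

definition tau :: "real measure \<Rightarrow> real measure \<Rightarrow> (nat \<Rightarrow> real) \<Rightarrow> (nat \<Rightarrow> 'b::wellorder \<Rightarrow> 'b)
    \<Rightarrow> nat \<Rightarrow> real \<times> 'b \<Rightarrow> (real \<times> 'b) set \<Rightarrow> real" where
  "tau M0 M1 q alpha n s A =
     (let x = fst s; eta = snd s in
      if eta = ord0 then x * measure M0 (sect A ord0)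
      else if x < q n then measure M0 (sect A (alpha n eta))
      else measure M1 (sect A (alpha n eta)))"

definition RT :: "real measure \<Rightarrow> real measure \<Rightarrow> (nat \<Rightarrow> real) \<Rightarrow> (nat \<Rightarrow> 'b::wellorder \<Rightarrow> 'b)
    \<Rightarrow> (real \<times> 'b) set set \<Rightarrow> ((real \<times> 'b) \<times> (real \<times> 'b)) set" where
  "RT M0 M1 q alpha L = {(s, t). s \<in> SS \<and> t \<in> SS \<and>
      (\<forall>n. \<forall>E\<in>L. tau M0 M1 q alpha n s E = tau M0 M1 q alpha n t E)}"

definition closed_sets :: "(real \<times> 'b) set set \<Rightarrow> ((real \<times> 'b) \<times> (real \<times> 'b)) set
    \<Rightarrow> (real \<times> 'b) set set" where
  "closed_sets Sig R = {A \<in> Sig. \<forall>x s. x \<in> A \<and> (x, s) \<in> R \<longrightarrow> s \<in> A}"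

definition Gop :: "real measure \<Rightarrow> real measure \<Rightarrow> (nat \<Rightarrow> real) \<Rightarrow> (nat \<Rightarrow> 'b::wellorder \<Rightarrow> 'b)
    \<Rightarrow> (real \<times> 'b) set set \<Rightarrow> (real \<times> 'b) set set" where
  "Gop M0 M1 q alpha L = closed_sets (Sigma_S M0) (RT M0 M1 q alpha L)"

definition Giter :: "real measure \<Rightarrow> real measure \<Rightarrow> (nat \<Rightarrow> real) \<Rightarrow> (nat \<Rightarrow> 'b::wellorder \<Rightarrow> 'b)
    \<Rightarrow> (real \<times> 'b) set set \<Rightarrow> 'b \<Rightarrow> (real \<times> 'b) set set" where
  "Giter M0 M1 q alpha L = wfrec {(x, y). x < y}
     (\<lambda>f xi. if xi = ord0 then L
             else if (\<exists>z. is_succ_of xi z) then Gop M0 M1 q alpha (f (THE z. is_succ_of xi z))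
             else sigma_sets SS (\<Union>g\<in>{g. g < xi}. f g))"

definition Lambda0 :: "(real \<times> 'b::wellorder) set set" where
  "Lambda0 = {A. A \<subseteq> SS \<and> sect A ord0 \<in> sets borel \<and>
      (\<forall>a. a \<noteq> ord0 \<longrightarrow> sect A a = {} \<or> sect A a = unit_ival)}"

end

theory Submission
  imports Defs
begin
lemma succ_unique: "is_succ_of e z \<Longrightarrow> is_succ_of e z' \<Longrightarrow> z = z'"
  unfolding is_succ_of_def by (metis linorder_neqE)

lemma the_succ: "is_succ_of e z \<Longrightarrow> (THE z. is_succ_of e z) = z"
  using succ_unique by blast

lemma Giter_eq: "Giter M0 M1 q alpha L xi = (if xi = ord0 then L
   else if (\<exists>z. is_succ_of xi z) then Gop M0 M1 q alpha (Giter M0 M1 q alpha L (THE z. is_succ_of xi z))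
   else sigma_sets SS (\<Union>g\<in>{g. g < xi}. Giter M0 M1 q alpha L g))"
proof -
  have wf: "wf {(x, y). x < (y::'a::wellorder)}" by (rule wf)
  define G where "G = Giter M0 M1 q alpha L"
  have G: "G xi = (if xi = ord0 then L
             else if (\<exists>z. is_succ_of xi z) then Gop M0 M1 q alpha (cut G {(x, y). x < y} xi (THE z. is_succ_of xi z))
             else sigma_sets SS (\<Union>g\<in>{g. g < xi}. cut G {(x, y). x < y} xi g))"
    unfolding G_def Giter_def by (rule wfrec[OF wf])
  have c: "\<And>g. g < xi \<Longrightarrow> cut G {(x, y). x < y} xi g = G g"
    by (rule cut_apply) simp
  have u: "(\<Union>g\<in>{g. g < xi}. cut G {(x, y). x < y} xi g) = (\<Union>g\<in>{g. g < xi}. G g)"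
    using c by (intro SUP_cong) auto
  show ?thesis
  proof (cases "\<exists>z. is_succ_of xi z")
    case True
    then obtain z where z: "is_succ_of xi z" by blast
    have t: "(THE z. is_succ_of xi z) = z" by (rule the_succ[OF z])
    have "z < xi" using z unfolding is_succ_of_def by simp
    then have cz: "cut G {(x, y). x < y} xi z = G z" by (rule c)
    show ?thesis unfolding G_def[symmetric] t apply (subst G) unfolding t by (simp only: True if_True cz)
  next
    case False
    then show ?thesis unfolding G_def[symmetric] apply (subst G) by (simp only: u False if_False)
  qed
qed

lemma ord0_le: "ord0 \<le> (x::'a::wellorder)"
  unfolding ord0_def by (rule Least_le) simp


lemma cell_borel0: fixes m :: nat assumes "m \<noteq> 0" shows "{y. \<forall>n<m. (y < (q n::real)) = (n \<in> S)} \<in> sets borel"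
proof -
  have "{y. \<forall>n<m. (y < (q n::real)) = (n \<in> S)} = (\<Inter>n\<in>{..<m}. {y. (y < q n) = (n \<in> S)})"
    by auto
  also have "\<dots> \<in> sets borel"
  proof (intro sets.finite_INT)
    fix n
    have "{y. (y < q n) = (n \<in> S)} = (if n \<in> S then {..<q n} else {q n..})" by auto
    then show "{y. (y < q n) = (n \<in> S)} \<in> sets borel" by simp
  qed (use assms in auto)
  finally show ?thesis .
qed
lemma cell_borel: "{y. \<forall>n<m. (y < (q n::real)) = (n \<in> S)} \<in> sets borel" for m :: nat
  by (cases "m = 0") (auto intro: cell_borel0)

lemma sect_sub: "A \<subseteq> SS \<Longrightarrow> sect A e \<subseteq> unit_ival"
  unfolding SS_def sect_def by auto

lemma sect_SS: "sect SS e = unit_ival"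
  unfolding SS_def sect_def by auto

lemma sect_diff: "sect (X - Y) e = sect X e - sect Y e"
  unfolding sect_def by auto

lemma sect_UN: "sect (\<Union>(range A)) e = (\<Union>i. sect (A i) e)"
  unfolding sect_def by auto

lemma ival_borel: "unit_ival \<in> sets borel"
  unfolding unit_ival_def by simp

lemma sig_borel:
  assumes "\<And>A. A \<in> X \<Longrightarrow> sect A e \<in> sets borel" and "B \<in> sigma_sets SS X"
  shows "sect B e \<in> sets borel"
  using assms(2)
proof (induction rule: sigma_sets.induct)
  case (Basic a) then show ?case using assms(1) by blast
next
  case Empty then show ?case by (simp add: sect_def)
next
  case (Compl a) then show ?case by (simp add: sect_diff sect_SS ival_borel sets.Diff)
next
  case (Union a) then show ?case by (simp add: sect_UN sets.countable_UN)
qed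

lemma sig_triv:
  assumes "\<And>A. A \<in> X \<Longrightarrow> sect A e = {} \<or> sect A e = unit_ival" and "B \<in> sigma_sets SS X"
  shows "sect B e = {} \<or> sect B e = unit_ival"
  using assms(2)
proof (induction rule: sigma_sets.induct)
  case (Basic a) then show ?case using assms(1) by blast
next
  case Empty then show ?case by (simp add: sect_def)
next
  case (Compl a) then show ?case by (auto simp add: sect_diff sect_SS)
next
  case (Union a)
  show ?case
  proof (cases "\<exists>i. sect (a i) e = unit_ival")
    case True
    then obtain i where "sect (a i) e = unit_ival" by blast
    moreover have "sect (a j) e \<subseteq> unit_ival" for j using Union.IH[of j] by auto
    ultimately have "(\<Union>i. sect (a i) e) = unit_ival" by blast
    then show ?thesis by (simp add: sect_UN)
  next
    case False
    then have "(\<Union>i. sect (a i) e) = {}" using Union.IH by auto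
    then show ?thesis by (simp add: sect_UN)
  qed
qed

lemma Gop_sub: "space M0 = unit_ival \<Longrightarrow> A \<in> Gop M0 M1 q alpha L \<Longrightarrow> A \<subseteq> SS"
  unfolding Gop_def closed_sets_def Sigma_S_def
  using sets.sets_into_space[of A "M0 \<Otimes>\<^sub>M count_space UNIV"]
  by (auto simp: space_pair_measure SS_def)

lemma Gop_closed: "A \<in> Gop M0 M1 q alpha L \<Longrightarrow> x \<in> A \<Longrightarrow> (x, y) \<in> RT M0 M1 q alpha L \<Longrightarrow> y \<in> A"
  unfolding Gop_def closed_sets_def by blast

lemma RT_intro:
  assumes "e \<noteq> ord0" "x \<in> unit_ival" "y \<in> unit_ival"
    and "\<forall>n. (x < q n \<longleftrightarrow> y < q n) \<or>
           (\<forall>E\<in>L. measure M0 (sect E (alpha n e)) = measure M1 (sect E (alpha n e)))"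
  shows "((x, e), (y, e)) \<in> RT M0 M1 q alpha L"
  unfolding RT_def
proof (clarsimp, intro conjI allI ballI)
  show "(x, e) \<in> SS" "(y, e) \<in> SS" using assms by (auto simp: SS_def)
  fix n E assume E: "E \<in> L"
  show "tau M0 M1 q alpha n (x, e) E = tau M0 M1 q alpha n (y, e) E"
    using assms(1) assms(4)[rule_format, of n] E unfolding tau_def Let_def by auto
qed

theorem lemma5p6:
  fixes V :: "real set" and M0 M1 :: "real measure" and q :: "nat \<Rightarrow> real"
    and alpha :: "nat \<Rightarrow> 'b::wellorder \<Rightarrow> 'b"
  assumes beta_le_omega1: "\<forall>eta::'b. countable {g. g < eta}"
    and V_sub: "V \<subseteq> unit_ival"
    and V_nonmeas: "V \<notin> sets lebesgue"
    and M0_space: "space M0 = unit_ival" and M0_sets: "sets M0 = BV V"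
    and M1_space: "space M1 = unit_ival" and M1_sets: "sets M1 = BV V"
    and M0_ext: "\<forall>B \<in> sets borel. B \<subseteq> unit_ival \<longrightarrow> emeasure M0 B = emeasure lborel B"
    and M1_ext: "\<forall>B \<in> sets borel. B \<subseteq> unit_ival \<longrightarrow> emeasure M1 B = emeasure lborel B"
    and M01_V: "emeasure M0 V \<noteq> emeasure M1 V"
    and q_enum: "bij_betw q UNIV (\<rat> \<inter> unit_ival)"
    and alpha_0: "\<forall>n. alpha n ord0 = ord0"
    and alpha_succ: "\<forall>n eta z. is_succ_of eta z \<longrightarrow> alpha n eta = z"
    and alpha_lim: "\<forall>l. is_limit l \<longrightarrow>
          strict_mono (\<lambda>n. alpha n l) \<and> (\<forall>n. alpha n l \<noteq> ord0 \<and> alpha n l < l) \<and>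
          (\<forall>g. g < l \<longrightarrow> (\<exists>n. g \<le> alpha n l))"
  shows "(\<forall>xi eta. xi \<le> eta \<longrightarrow>
            (\<forall>A \<in> Giter M0 M1 q alpha Lambda0 xi. sect A eta \<in> sets borel))
       \<and> (\<forall>xi z eta. is_succ_of eta z \<and> xi < eta \<longrightarrow>
            (\<forall>A \<in> Giter M0 M1 q alpha Lambda0 xi. sect A eta = {} \<or> sect A eta = unit_ival))"
proof -
  define G where "G = Giter M0 M1 q alpha Lambda0"
  have meq: "measure M0 B = measure M1 B" if "B \<in> sets borel" "B \<subseteq> unit_ival" for B
    using M0_ext M1_ext that unfolding measure_def by simp
  define P where "P xi \<longleftrightarrow> (\<forall>A\<in>G xi. A \<subseteq> SS \<and> (\<forall>e. xi \<le> e \<longrightarrow> sect A e \<in> sets borel) \<and>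
        (\<forall>e z. is_succ_of e z \<and> xi < e \<longrightarrow> sect A e = {} \<or> sect A e = unit_ival))" for xi
  have "P xi" for xi
  proof (induction xi rule: less_induct)
    case (less xi)
    show ?case
    proof (cases "xi = ord0")
      case True
      then have Gx: "G xi = Lambda0" unfolding G_def by (subst Giter_eq) simp
      show ?thesis unfolding P_def Gx
      proof (intro ballI conjI allI impI)
        fix A :: "(real \<times> 'b) set" assume A: "A \<in> Lambda0"
        then show "A \<subseteq> SS" unfolding Lambda0_def by auto
        fix e show "sect A e \<in> sets borel"
          using A ival_borel unfolding Lambda0_def by (cases "e = ord0") auto
      next
        fix A :: "(real \<times> 'b) set" and e z assume A: "A \<in> Lambda0" and ez: "is_succ_of e z \<and> xi < e"
        then have "e \<noteq> ord0" using True by auto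
        then show "sect A e = {} \<or> sect A e = unit_ival" using A unfolding Lambda0_def by auto
      qed
    next
      case nz: False
      show ?thesis
      proof (cases "\<exists>z. is_succ_of xi z")
        case True
        then obtain z0 where z0: "is_succ_of xi z0" by blast
        then have z0lt: "z0 < xi" unfolding is_succ_of_def by auto
        have Gx: "G xi = Gop M0 M1 q alpha (G z0)" unfolding G_def
          using nz True the_succ[OF z0] by (subst Giter_eq) simp
        have IH: "P z0" using less z0lt by blast
        show ?thesis unfolding P_def
        proof (intro ballI)
          fix A assume A: "A \<in> G xi"
          then have Asub: "A \<subseteq> SS" using Gop_sub[OF M0_space, of A M1 q alpha "G z0"] Gx by simp
          have key: "(y, e) \<in> A" if "e \<noteq> ord0" "(x, e) \<in> A" "y \<in> unit_ival"
              "\<forall>n. (x < q n \<longleftrightarrow> y < q n) \<or> z0 \<le> alpha n e" for x y e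
          proof -
            have x: "x \<in> unit_ival" using that(2) Asub by (auto simp: SS_def)
            have "((x, e), (y, e)) \<in> RT M0 M1 q alpha (G z0)"
            proof (rule RT_intro[OF that(1) x that(3)], intro allI)
              fix n
              show "(x < q n \<longleftrightarrow> y < q n) \<or>
                 (\<forall>E\<in>G z0. measure M0 (sect E (alpha n e)) = measure M1 (sect E (alpha n e)))"
              proof (cases "z0 \<le> alpha n e")
                case True
                have "\<forall>E\<in>G z0. measure M0 (sect E (alpha n e)) = measure M1 (sect E (alpha n e))"
                proof
                  fix E assume E: "E \<in> G z0"
                  then have ES: "E \<subseteq> SS" and Eb: "sect E (alpha n e) \<in> sets borel"
                    using IH True unfolding P_def by auto
                  show "measure M0 (sect E (alpha n e)) = measure M1 (sect E (alpha n e))"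
                    by (rule meq[OF Eb sect_sub[OF ES]])
                qed
                then show ?thesis by blast
              next
                case False then show ?thesis using that(4) by blast
              qed
            qed
            moreover have "A \<in> Gop M0 M1 q alpha (G z0)" using A Gx by simp
            ultimately show ?thesis by (intro Gop_closed[OF _ that(2)])
          qed
          have all: "sect A e = {} \<or> sect A e = unit_ival" if "e \<noteq> ord0" "\<forall>n. z0 \<le> alpha n e" for e
          proof (cases "sect A e = {}")
            case False
            then obtain x where "(x, e) \<in> A" unfolding sect_def by auto
            have "unit_ival \<subseteq> sect A e"
            proof
              fix y assume y: "y \<in> unit_ival"
              have "(y, e) \<in> A" by (rule key[OF that(1) \<open>(x, e) \<in> A\<close> y]) (use that(2) in blast)
              then show "y \<in> sect A e" unfolding sect_def by simp
            qed
            then show ?thesis using sect_sub[OF Asub, of e] by blast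
          qed simp
          show "A \<subseteq> SS \<and> (\<forall>e. xi \<le> e \<longrightarrow> sect A e \<in> sets borel) \<and>
             (\<forall>e z. is_succ_of e z \<and> xi < e \<longrightarrow> sect A e = {} \<or> sect A e = unit_ival)"
          proof (intro conjI allI impI)
            show "A \<subseteq> SS" by (rule Asub)
          next
            fix e z assume ez: "is_succ_of e z \<and> xi < e"
            then have "xi \<le> z" unfolding is_succ_of_def by (metis leI)
            then have "\<forall>n. z0 \<le> alpha n e" using alpha_succ ez z0lt by auto
            moreover have "e \<noteq> ord0" using ez ord0_le[of z] unfolding is_succ_of_def by auto
            ultimately show "sect A e = {} \<or> sect A e = unit_ival" using all by blast
          next
            fix e assume xe: "xi \<le> e"
            have ne: "e \<noteq> ord0" using xe z0lt ord0_le[of z0] by auto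
            show "sect A e \<in> sets borel"
            proof (cases "\<exists>z. is_succ_of e z")
              case True
              then obtain z where z: "is_succ_of e z" by blast
              have "z0 \<le> z"
              proof (rule ccontr)
                assume "\<not> z0 \<le> z"
                then have "z < z0" "z0 < e" using z0lt xe by auto
                then show False using z unfolding is_succ_of_def by blast
              qed
              then have "\<forall>n. z0 \<le> alpha n e" using alpha_succ z by auto
              then have "sect A e = {} \<or> sect A e = unit_ival" by (rule all[OF ne])
              then show ?thesis using ival_borel by (metis sets.empty_sets)
            next
              case False
              then have lim: "is_limit e" using ne unfolding is_limit_def by simp
              have "z0 < e" using z0lt xe by auto
              note al = alpha_lim[rule_format, OF lim]
              have sm: "strict_mono (\<lambda>n. alpha n e)" by (rule al[THEN conjunct1])
              have cof: "\<forall>g. g < e \<longrightarrow> (\<exists>n. g \<le> alpha n e)" by (rule al[THEN conjunct2, THEN conjunct2])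
              obtain m where m: "z0 \<le> alpha m e" using cof \<open>z0 < e\<close> by blast
              have big: "z0 \<le> alpha n e" if "\<not> n < m" for n
              proof -
                have "alpha m e \<le> alpha n e" using that by (simp add: strict_mono_less_eq[OF sm])
                then show ?thesis using m by auto
              qed
              define f where "f y = {n. n < m \<and> y < q n}" for y
              define C where "C S = unit_ival \<inter> {y. \<forall>n<m. (y < q n) = (n \<in> S)}" for S
              have eq: "sect A e = (\<Union>S\<in>f ` sect A e. C S)"
              proof
                show "sect A e \<subseteq> (\<Union>S\<in>f ` sect A e. C S)"
                proof
                  fix x assume x: "x \<in> sect A e"
                  then have "x \<in> unit_ival" using sect_sub[OF Asub, of e] by blast
                  then have "x \<in> C (f x)" unfolding C_def f_def by simp
                  then show "x \<in> (\<Union>S\<in>f ` sect A e. C S)" using x by blast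
                qed
                show "(\<Union>S\<in>f ` sect A e. C S) \<subseteq> sect A e"
                proof (clarify)
                  fix y x assume x: "x \<in> sect A e" and y: "y \<in> C (f x)"
                  have "(y, e) \<in> A"
                  proof (rule key[OF ne])
                    show "(x, e) \<in> A" using x unfolding sect_def by auto
                    show "y \<in> unit_ival" using y unfolding C_def by auto
                    show "\<forall>n. (x < q n \<longleftrightarrow> y < q n) \<or> z0 \<le> alpha n e"
                    proof
                      fix n
                      show "(x < q n \<longleftrightarrow> y < q n) \<or> z0 \<le> alpha n e"
                      proof (cases "n < m")
                        case True
                        then have "(y < q n) = (n \<in> f x)" using y unfolding C_def by blast
                        then show ?thesis using True unfolding f_def by simp
                      next
                        case False then show ?thesis using big by blast
                      qed
                    qed
                  qed
                  then show "y \<in> sect A e" unfolding sect_def by auto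
                qed
              qed
              have fin: "finite (f ` sect A e)"
                by (rule finite_subset[of _ "Pow {..<m}"]) (auto simp: f_def)
              have "(\<Union>S\<in>f ` sect A e. C S) \<in> sets borel"
              proof (rule sets.finite_UN[OF fin])
                fix S assume "S \<in> f ` sect A e" show "C S \<in> sets borel" unfolding C_def by (rule sets.Int[OF ival_borel cell_borel])
              qed
              then show ?thesis using eq by simp
            qed
          qed
        qed
      next
        case False
        have Gx: "G xi = sigma_sets SS (\<Union>g\<in>{g. g < xi}. G g)" unfolding G_def
          by (subst Giter_eq) (simp only: nz False if_False)
        have IH: "\<And>g. g < xi \<Longrightarrow> P g" using less by blast
        show ?thesis unfolding P_def
        proof (intro ballI conjI allI impI)
          fix A assume A: "A \<in> G xi"
          have "(\<Union>g\<in>{g. g < xi}. G g) \<subseteq> Pow SS"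
          proof
            fix B assume "B \<in> (\<Union>g\<in>{g. g < xi}. G g)"
            then obtain g where g: "g < xi" "B \<in> G g" by auto
            have "P g" by (rule IH[OF g(1)])
            then have "B \<subseteq> SS" using g(2) unfolding P_def by blast
            then show "B \<in> Pow SS" by simp
          qed
          then show "A \<subseteq> SS" using A Gx sigma_sets_into_sp by blast
        next
          fix A e assume A: "A \<in> G xi" and xe: "xi \<le> e"
          show "sect A e \<in> sets borel"
          proof (rule sig_borel)
            show "A \<in> sigma_sets SS (\<Union>g\<in>{g. g < xi}. G g)" using A Gx by simp
            fix B assume "B \<in> (\<Union>g\<in>{g. g < xi}. G g)"
            then obtain g where "g < xi" "B \<in> G g" by auto
            then have g: "g < xi" "B \<in> G g" .
            have "P g" by (rule IH[OF g(1)])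
            then have "\<forall>e. g \<le> e \<longrightarrow> sect B e \<in> sets borel"
              using g(2) unfolding P_def by blast
            moreover have "g \<le> e" using xe g(1) by auto
            ultimately show "sect B e \<in> sets borel" by blast
          qed
        next
          fix A e z assume A: "A \<in> G xi" and ez: "is_succ_of e z \<and> xi < e"
          show "sect A e = {} \<or> sect A e = unit_ival"
          proof (rule sig_triv)
            show "A \<in> sigma_sets SS (\<Union>g\<in>{g. g < xi}. G g)" using A Gx by simp
            fix B assume "B \<in> (\<Union>g\<in>{g. g < xi}. G g)"
            then obtain g where "g < xi" "B \<in> G g" by auto
            then have g: "g < xi" "B \<in> G g" .
            have "P g" by (rule IH[OF g(1)])
            then have "\<forall>e z. is_succ_of e z \<and> g < e \<longrightarrow> sect B e = {} \<or> sect B e = unit_ival"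
              using g(2) unfolding P_def by blast
            moreover have "is_succ_of e z \<and> g < e" using ez g(1) by auto
            ultimately show "sect B e = {} \<or> sect B e = unit_ival" by blast
          qed
        qed
      qed
    qed
  qed
  then show ?thesis unfolding P_def G_def
  proof (intro conjI allI impI ballI)
    fix xi e A assume H: "\<And>xi. \<forall>A\<in>Giter M0 M1 q alpha Lambda0 xi. A \<subseteq> SS \<and>
        (\<forall>e. xi \<le> e \<longrightarrow> sect A e \<in> sets borel) \<and>
        (\<forall>e z. is_succ_of e z \<and> xi < e \<longrightarrow> sect A e = {} \<or> sect A e = unit_ival)"
      and "xi \<le> e" "A \<in> Giter M0 M1 q alpha Lambda0 xi"
    then show "sect A e \<in> sets borel" by blast
  next
    fix xi z e A assume H: "\<And>xi. \<forall>A\<in>Giter M0 M1 q alpha Lambda0 xi. A \<subseteq> SS \<and>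
        (\<forall>e. xi \<le> e \<longrightarrow> sect A e \<in> sets borel) \<and>
        (\<forall>e z. is_succ_of e z \<and> xi < e \<longrightarrow> sect A e = {} \<or> sect A e = unit_ival)"
      and "is_succ_of e z \<and> xi < e" "A \<in> Giter M0 M1 q alpha Lambda0 xi"
    then show "sect A e = {} \<or> sect A e = unit_ival" by blast
  qed
qed

end
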